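(* Let $f:\mathbb{R}^M\times\Theta\to\mathbb{R}^N$ be a network whose first layer is linear, $f(\mathbf{x};\boldsymbol{\theta})=g(\mathbf{W}\mathbf{x};\bar{\boldsymbol{\theta}})$ with $\boldsymbol{\theta}=(\mathbf{W},\bar{\boldsymbol{\theta}})$, $\mathbf{W}\in\mathbb{R}^{d\times M}$, $g$ differentiable in its first argument and twice differentiable in the parameters. Let $(\mathbf{x}_i,\mathbf{y}_i)_{i=1}^n$ be training data with all $\mathbf{x}_i\ne0$ and let $\boldsymbol{\theta}^*$ be an exact interpolation solution ($f(\mathbf{x}_i;\boldsymbol{\theta}^* )=\mathbf{y}_i$ for all $i$) with first-layer weight $\mathbf{W}$. Then $$\mathrm{MLS}_f=\frac1n\sum_{i=1}^n\|J_f(\mathbf{x}_i)\|_2\le \|\mathbf{W}\|_2\sqrt{\frac1n\sum_{i=1}^n\frac{1}{\|\mathbf{x}_i\|_2^2}}\;S(\boldsymbol{\theta}^* )^{1/2}.$$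
   Context: The loss is $L(\boldsymbol{\theta})=\frac1n\sum_{i=1}^n\frac12\|f(\mathbf{x}_i;\boldsymbol{\theta})-\mathbf{y}_i\|_2^2$ and the sharpness is $S(\boldsymbol{\theta})=\operatorname{Tr}(\nabla^2_{\boldsymbol{\theta}}L(\boldsymbol{\theta}))$. $J_f(\mathbf{x})\in\mathbb{R}^{N\times M}$ is the Jacobian of $\mathbf{x}\mapsto f(\mathbf{x};\boldsymbol{\theta}^* )$; the Maximum Local Sensitivity $\mathrm{MLS}_f$ is the sample mean of its largest singular value over the training inputs. $\|\cdot\|_2$ is the Euclidean norm for vectors and spectral norm for matrices. *)

theory Defs
  imports "HOL-Analysis.Analysis"
begin

definition spectral_norm :: "real^'m^'n \<Rightarrow> real" where
  "spectral_norm A = onorm (\<lambda>v. A *v v)"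

definition net :: "(real^'d \<Rightarrow> 'p \<Rightarrow> real^'n) \<Rightarrow> real^'m \<Rightarrow> (real^'m^'d) \<times> 'p \<Rightarrow> real^'n" where
  "net g x \<theta> = g (fst \<theta> *v x) (snd \<theta>)"

definition loss :: "(real^'d \<Rightarrow> 'p \<Rightarrow> real^'n) \<Rightarrow> (nat \<Rightarrow> real^'m) \<Rightarrow> (nat \<Rightarrow> real^'n) \<Rightarrow> nat
     \<Rightarrow> (real^'m^'d) \<times> 'p \<Rightarrow> real" where
  "loss g x y n \<theta> = (1 / real n) * (\<Sum>i<n. (1/2) * (norm (net g (x i) \<theta> - y i))\<^sup>2)"

definition hessian_trace :: "('a::euclidean_space \<Rightarrow> real) \<Rightarrow> 'a \<Rightarrow> real" where
  "hessian_trace L t = (\<Sum>b\<in>Basis. frechet_derivative (\<lambda>s. frechet_derivative L (at s) b) (at t) b)"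

text \<open>Twice differentiable everywhere: differentiable, and the derivative map s \<mapsto> DF(s) is
  differentiable (equivalently, each s \<mapsto> DF(s) v is differentiable, finite dimensions).\<close>
definition twice_differentiable :: "('a::euclidean_space \<Rightarrow> 'b::real_normed_vector) \<Rightarrow> bool" where
  "twice_differentiable F \<longleftrightarrow> (\<forall>t. F differentiable (at t)) \<and>
     (\<forall>v t. (\<lambda>s. frechet_derivative F (at s) v) differentiable (at t))"

end

theory Submission
  imports Defs
begin
lemma sum_Basis_vec_gen:
  fixes \<phi> :: "'a::euclidean_space^'b \<Rightarrow> real"
  shows "(\<Sum>b\<in>Basis. \<phi> b) = (\<Sum>j\<in>UNIV. \<Sum>u\<in>Basis. \<phi> (axis j u))"
proof -
  have "(\<Sum>b\<in>Basis. \<phi> b) = (\<Sum>j\<in>UNIV. \<Sum>b\<in>(\<Union>u\<in>Basis. {axis j u}). \<phi> b)"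
    unfolding Basis_vec_def
    by (rule sum.UNION_disjoint) (auto simp: axis_eq_axis)
  also have "\<dots> = (\<Sum>j\<in>UNIV. \<Sum>u\<in>Basis. \<phi> (axis j u))"
  proof (rule sum.cong[OF refl])
    fix j :: 'b
    have "(\<Union>u\<in>Basis. {axis j u}) = (axis j) ` (Basis::'a set)" by auto
    moreover have "inj_on (axis j) (Basis::'a set)" by (auto intro!: inj_onI simp: axis_eq_axis)
    ultimately show "(\<Sum>b\<in>(\<Union>u\<in>Basis. {axis j u}). \<phi> b) = (\<Sum>u\<in>Basis. \<phi> (axis j u))"
      by (simp add: sum.reindex)
  qed
  finally show ?thesis .
qed
lemma sum_Basis_vec_real:
  fixes \<phi> :: "real^'b \<Rightarrow> real"
  shows "(\<Sum>b\<in>Basis. \<phi> b) = (\<Sum>j\<in>UNIV. \<phi> (axis j 1))"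
  by (simp add: sum_Basis_vec_gen)
lemma mat_axis_mult:
  fixes x :: "real^'m"
  shows "(axis j (axis k 1) :: real^'m^'d) *v x = (x$k) *\<^sub>R axis j 1"
  proof -
  have "\<And>i. (\<Sum>c\<in>UNIV. (if c = k then x$c else 0)) = x$k" by simp
  have "\<And>i. (\<Sum>j\<in>UNIV. (if j = k then 1 else 0) * (x $ j)) = x$k"
    by (simp add: if_distrib[of "\<lambda>c. c * _"] cong: if_cong)
  then show ?thesis by (simp add: vec_eq_iff matrix_vector_mult_def axis_def)
qed
lemma sumsq: "(norm (x::real^'m))\<^sup>2 = (\<Sum>k\<in>UNIV. (x$k)\<^sup>2)"
  proof -
  have "(norm x)\<^sup>2 = x \<bullet> x" by (simp add: dot_square_norm)
  then show ?thesis by (simp add: inner_vec_def power2_eq_square)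
qed
lemma vexp: "(x::real^'m) = (\<Sum>k\<in>UNIV. (x$k) *\<^sub>R axis k 1)"
  by (auto simp: vec_eq_iff axis_def if_distrib cong: if_cong)
lemma frob:
  fixes D :: "real^'d \<Rightarrow> real^'n"
  assumes "linear D"
  shows "norm (D v) \<le> L2_set (\<lambda>j. norm (D (axis j 1))) UNIV * norm v"
proof -
  have "D v = (\<Sum>j\<in>UNIV. (v$j) *\<^sub>R D (axis j 1))"
    by (subst vexp) (simp add: linear_sum[OF assms] linear_scale[OF assms])
  hence "norm (D v) \<le> (\<Sum>j\<in>UNIV. \<bar>v$j\<bar> * norm (D (axis j 1)))"
    by (metis (no_types, lifting) norm_scaleR norm_sum sum.cong)
  also have "\<dots> = (\<Sum>j\<in>UNIV. \<bar>norm (v$j)\<bar> * \<bar>norm (D (axis j 1))\<bar>)" by simp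
  also have "\<dots> \<le> L2_set (\<lambda>j. norm (v$j)) UNIV * L2_set (\<lambda>j. norm (D (axis j 1))) UNIV"
    by (rule L2_set_mult_ineq)
  also have "\<dots> = L2_set (\<lambda>j. norm (D (axis j 1))) UNIV * norm v"
    by (simp add: norm_vec_def)
  finally show ?thesis .
qed

lemma DF_W:
  fixes g :: "real^'d \<Rightarrow> 'p::euclidean_space \<Rightarrow> real^'n"
    and W :: "real^'m^'d" and u :: "real^'m"
  assumes gd: "(\<lambda>z. g z tb) differentiable (at (W *v u))"
    and nd: "net g u differentiable (at (W, tb))"
  shows "frechet_derivative (net g u) (at (W, tb)) (E, 0) = frechet_derivative (\<lambda>z. g z tb) (at (W *v u)) (E *v u)"
proof -
  let ?Dg = "frechet_derivative (\<lambda>z. g z tb) (at (W *v u))"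
  let ?DF = "frechet_derivative (net g u) (at (W, tb))"
  have hg: "((\<lambda>z. g z tb) has_derivative ?Dg) (at (W *v u))"
    using gd frechet_derivative_works by blast
  have hF: "(net g u has_derivative ?DF) (at (W, tb))"
    using nd frechet_derivative_works by blast
  have hm: "((\<lambda>M. M *v u) has_derivative (\<lambda>E. E *v u)) (at W)"
  proof (intro bounded_linear_imp_has_derivative)
    have "linear (\<lambda>M::real^'m^'d. M *v u)"
      by (auto intro!: linearI simp: vec_eq_iff matrix_vector_mult_def sum.distrib algebra_simps sum_distrib_left)
    then show "bounded_linear (\<lambda>M::real^'m^'d. M *v u)" by (simp add: linear_conv_bounded_linear)
  qed
  have hp: "((\<lambda>M::real^'m^'d. (M, tb)) has_derivative (\<lambda>E. (E, 0))) (at W)"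
    by (auto intro!: derivative_eq_intros)
  have 1: "((\<lambda>M. g (M *v u) tb) has_derivative (?Dg \<circ> (\<lambda>E. E *v u))) (at W)"
    using diff_chain_at[OF hm hg] by (simp add: o_def)
  have 2: "((\<lambda>M. g (M *v u) tb) has_derivative (?DF \<circ> (\<lambda>E. (E, 0)))) (at W)"
    using diff_chain_at[OF hp, of "net g u" ?DF] hF by (simp add: o_def net_def)
  have "?Dg \<circ> (\<lambda>E. E *v u) = ?DF \<circ> (\<lambda>E. (E, 0))"
    using has_derivative_unique[OF 1 2] .
  then show ?thesis by (metis comp_apply)
qed
lemma loss_deriv:
  fixes F :: "nat \<Rightarrow> 'a::euclidean_space \<Rightarrow> real^'n"
  assumes "\<And>i. (F i has_derivative D i) (at s)"
  shows "((\<lambda>s. (1/real n) * (\<Sum>i<n. (1/2) * (norm (F i s - y i))\<^sup>2)) has_derivative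
          (\<lambda>h. (1/real n) * (\<Sum>i<n. (F i s - y i) \<bullet> D i h))) (at s)"
proof -
  have e: "(\<lambda>s. (1/real n) * (\<Sum>i<n. (1/2) * (norm (F i s - y i))\<^sup>2)) =
     (\<lambda>s. (1/real n) * (\<Sum>i<n. (1/2) * ((F i s - y i) \<bullet> (F i s - y i))))"
    by (simp add: power2_norm_eq_inner)
  show ?thesis unfolding e
    by (auto intro!: derivative_eq_intros assms simp: inner_commute sum_distrib_left)
qed

lemma second_deriv:
  fixes F G :: "nat \<Rightarrow> 'a::euclidean_space \<Rightarrow> real^'n"
  assumes "\<And>i. (F i has_derivative D i) (at t)" "\<And>i. (G i has_derivative G' i) (at t)"
  shows "((\<lambda>s. (1/real n) * (\<Sum>i<n. (F i s - y i) \<bullet> G i s)) has_derivative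
          (\<lambda>h. (1/real n) * (\<Sum>i<n. (F i t - y i) \<bullet> G' i h + D i h \<bullet> G i t))) (at t)"
proof (intro has_derivative_mult_right has_derivative_sum)
  fix i
  have a: "((\<lambda>s. F i s - y i) has_derivative D i) (at t)"
    using has_derivative_diff[OF assms(1)[of i] has_derivative_const[of "y i"]] by simp
  show "((\<lambda>s. (F i s - y i) \<bullet> G i s) has_derivative (\<lambda>h. (F i t - y i) \<bullet> G' i h + D i h \<bullet> G i t)) (at t)"
    using has_derivative_inner[OF a assms(2)[of i]] by simp
qed
lemma jac_bound:
  fixes g :: "real^'d \<Rightarrow> 'p::euclidean_space \<Rightarrow> real^'n"
    and W :: "real^'m^'d" and u :: "real^'m"
  assumes gd: "(\<lambda>z. g z tb) differentiable (at (W *v u))"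
  shows "spectral_norm (jacobian (\<lambda>u. net g u (W, tb)) (at u))
    \<le> spectral_norm W * L2_set (\<lambda>j. norm (frechet_derivative (\<lambda>z. g z tb) (at (W *v u)) (axis j 1))) UNIV"
proof -
  let ?Dg = "frechet_derivative (\<lambda>z. g z tb) (at (W *v u))"
  let ?Fr = "L2_set (\<lambda>j. norm (?Dg (axis j 1))) UNIV"
  have hg: "((\<lambda>z. g z tb) has_derivative ?Dg) (at (W *v u))"
    using gd frechet_derivative_works by blast
  have blW: "bounded_linear (\<lambda>v. W *v v)" by simp
  have hW: "((\<lambda>v. W *v v) has_derivative (\<lambda>v. W *v v)) (at u)"
    by (rule bounded_linear_imp_has_derivative[OF blW])
  have hJ: "((\<lambda>v. net g v (W, tb)) has_derivative (\<lambda>h. ?Dg (W *v h))) (at u)"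
    using diff_chain_at[OF hW hg] by (simp add: o_def net_def)
  have fd: "frechet_derivative (\<lambda>v. net g v (W, tb)) (at u) = (\<lambda>h. ?Dg (W *v h))"
    using frechet_derivative_at[OF hJ] by simp
  have lin: "linear (\<lambda>h. ?Dg (W *v h))" using has_derivative_linear[OF hJ] .
  have linD: "linear ?Dg" using has_derivative_linear[OF hg] .
  have sp: "spectral_norm (jacobian (\<lambda>u. net g u (W, tb)) (at u)) = onorm (\<lambda>h. ?Dg (W *v h))"
    unfolding spectral_norm_def jacobian_def fd
    using matrix_works[of "\<lambda>h. ?Dg (W *v h)"] lin by (simp add: linear_matrix_vector_mul_eq)
  have "onorm (\<lambda>h. ?Dg (W *v h)) \<le> spectral_norm W * ?Fr"
  proof (rule onorm_le)
    fix h
    have "norm (?Dg (W *v h)) \<le> ?Fr * norm (W *v h)" by (rule frob[OF linD])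
    also have "\<dots> \<le> ?Fr * (spectral_norm W * norm h)"
      unfolding spectral_norm_def by (intro mult_left_mono onorm[OF blW]) simp
    finally show "norm (?Dg (W *v h)) \<le> spectral_norm W * ?Fr * norm h" by (simp add: ac_simps)
  qed
  then show ?thesis using sp by simp
qed
lemma basis_sum:
  fixes g :: "real^'d \<Rightarrow> 'p::euclidean_space \<Rightarrow> real^'n"
    and W :: "real^'m^'d" and u :: "real^'m"
  assumes gd: "(\<lambda>z. g z tb) differentiable (at (W *v u))"
    and nd: "net g u differentiable (at (W, tb))"
  shows "(norm u)\<^sup>2 * (L2_set (\<lambda>j. norm (frechet_derivative (\<lambda>z. g z tb) (at (W *v u)) (axis j 1))) UNIV)\<^sup>2
     \<le> (\<Sum>b\<in>Basis. (norm (frechet_derivative (net g u) (at (W, tb)) b))\<^sup>2)"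
proof -
  let ?Dg = "frechet_derivative (\<lambda>z. g z tb) (at (W *v u))"
  let ?DF = "frechet_derivative (net g u) (at (W, tb))"
  define \<phi> where "\<phi> b = (norm (?DF b))\<^sup>2" for b
  have linD: "linear ?Dg"
    using gd frechet_derivative_works has_derivative_linear by blast
  have "(\<Sum>E\<in>(Basis::(real^'m^'d) set). \<phi> (E, 0)) = (\<Sum>b\<in>(\<lambda>E. (E, 0::'p)) ` Basis. \<phi> b)"
    by (rule sum.reindex[symmetric, unfolded o_def]) (auto intro: inj_onI)
  also have "\<dots> \<le> (\<Sum>b\<in>Basis. \<phi> b)"
    by (rule sum_mono2) (auto simp: Basis_prod_def \<phi>_def)
  finally have 1: "(\<Sum>E\<in>(Basis::(real^'m^'d) set). \<phi> (E, 0)) \<le> (\<Sum>b\<in>Basis. \<phi> b)" .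
  have "(\<Sum>E\<in>(Basis::(real^'m^'d) set). \<phi> (E, 0)) = (\<Sum>j\<in>UNIV. \<Sum>k\<in>UNIV. \<phi> (axis j (axis k 1), 0))"
    by (simp add: sum_Basis_vec_gen sum_Basis_vec_real)
  also have "\<dots> = (\<Sum>j\<in>UNIV. \<Sum>k\<in>UNIV. (u$k)\<^sup>2 * (norm (?Dg (axis j 1)))\<^sup>2)"
    unfolding \<phi>_def DF_W[OF gd nd] mat_axis_mult linear_scale[OF linD]
    by (simp add: power_mult_distrib)
  also have "\<dots> = (\<Sum>j\<in>UNIV. (norm (?Dg (axis j 1)))\<^sup>2) * (norm u)\<^sup>2"
    by (simp add: sumsq[of u] sum_distrib_left sum_distrib_right ac_simps)
  also have "\<dots> = (norm u)\<^sup>2 * (L2_set (\<lambda>j. norm (?Dg (axis j 1))) UNIV)\<^sup>2"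
    by (simp add: L2_set_def sum_nonneg)
  finally show ?thesis using 1 by (simp add: \<phi>_def)
qed
theorem proposition3:
  fixes g :: "real^'d \<Rightarrow> 'p::euclidean_space \<Rightarrow> real^'n"
    and W :: "real^'m^'d" and tb :: 'p
    and x :: "nat \<Rightarrow> real^'m" and y :: "nat \<Rightarrow> real^'n" and n :: nat
  assumes g_diff: "\<And>z q. (\<lambda>u. g u q) differentiable (at z)"
    and g_twice: "\<And>u::real^'m. twice_differentiable (net g u)"
    and x_nz: "\<And>i. i < n \<Longrightarrow> x i \<noteq> 0"
    and interp: "\<And>i. i < n \<Longrightarrow> net g (x i) (W, tb) = y i"
  shows "(1 / real n) * (\<Sum>i<n. spectral_norm (jacobian (\<lambda>u. net g u (W, tb)) (at (x i))))
     \<le> spectral_norm W * sqrt ((1 / real n) * (\<Sum>i<n. 1 / (norm (x i))\<^sup>2))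
        * sqrt (hessian_trace (loss g x y n) (W, tb))"
proof -
  define F where "F i = net g (x i)" for i
  define DF where "DF i s = frechet_derivative (F i) (at s)" for i s
  define Fr where "Fr i = L2_set (\<lambda>j. norm (frechet_derivative (\<lambda>z. g z tb) (at (W *v x i)) (axis j 1))) UNIV" for i
  define H where "H = hessian_trace (loss g x y n) (W, tb)"
  define sW where "sW = spectral_norm W"
  have hF: "(F i has_derivative DF i s) (at s)" for i s
    using g_twice[of "x i"] frechet_derivative_works
    unfolding twice_differentiable_def F_def DF_def by blast
  have Leq: "loss g x y n = (\<lambda>s. (1/real n) * (\<Sum>i<n. (1/2) * (norm (F i s - y i))\<^sup>2))"
    by (rule ext) (simp add: loss_def F_def)
  have dL: "frechet_derivative (loss g x y n) (at s) b = (1/real n) * (\<Sum>i<n. (F i s - y i) \<bullet> DF i s b)" for s b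
    using frechet_derivative_at[OF loss_deriv[of F "\<lambda>i. DF i s" s n y, OF hF]] unfolding Leq by metis
  have Hb: "frechet_derivative (\<lambda>s. frechet_derivative (loss g x y n) (at s) b) (at (W, tb)) b
      = (1/real n) * (\<Sum>i<n. (norm (DF i (W, tb) b))\<^sup>2)" for b
  proof -
    define G where "G i s = DF i s b" for i s
    define G' where "G' i = frechet_derivative (G i) (at (W, tb))" for i
    have hG: "(G i has_derivative G' i) (at (W, tb))" for i
      using g_twice[of "x i"] frechet_derivative_works
      unfolding twice_differentiable_def G'_def G_def DF_def F_def by blast
    have e: "(\<lambda>s. frechet_derivative (loss g x y n) (at s) b) = (\<lambda>s. (1/real n) * (\<Sum>i<n. (F i s - y i) \<bullet> G i s))"
      by (rule ext) (simp add: dL G_def)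
    have "frechet_derivative (\<lambda>s. frechet_derivative (loss g x y n) (at s) b) (at (W, tb))
        = (\<lambda>h. (1/real n) * (\<Sum>i<n. (F i (W, tb) - y i) \<bullet> G' i h + DF i (W, tb) h \<bullet> G i (W, tb)))"
      unfolding e by (rule frechet_derivative_at[symmetric, OF second_deriv[OF hF hG]])
    moreover have "(\<Sum>i<n. (F i (W, tb) - y i) \<bullet> G' i b + DF i (W, tb) b \<bullet> G i (W, tb))
        = (\<Sum>i<n. (norm (DF i (W, tb) b))\<^sup>2)"
      by (rule sum.cong) (auto simp: G_def F_def interp power2_norm_eq_inner)
    ultimately show ?thesis by simp
  qed
  have Heq: "H = (1/real n) * (\<Sum>i<n. \<Sum>b\<in>Basis. (norm (DF i (W, tb) b))\<^sup>2)"
    unfolding H_def hessian_trace_def Hb by (simp add: sum.swap[of _ "{..<_}"] sum_distrib_left)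
  have Hlow: "(\<Sum>i<n. (Fr i * norm (x i))\<^sup>2) \<le> (\<Sum>i<n. \<Sum>b\<in>Basis. (norm (DF i (W, tb) b))\<^sup>2)"
  proof (rule sum_mono)
    fix i
    have "(norm (x i))\<^sup>2 * (Fr i)\<^sup>2 \<le> (\<Sum>b\<in>Basis. (norm (DF i (W, tb) b))\<^sup>2)"
      unfolding Fr_def DF_def F_def
      by (rule basis_sum[OF g_diff]) (use g_twice[of "x i"] in \<open>simp add: twice_differentiable_def\<close>)
    then show "(Fr i * norm (x i))\<^sup>2 \<le> (\<Sum>b\<in>Basis. (norm (DF i (W, tb) b))\<^sup>2)"
      by (simp add: power_mult_distrib ac_simps)
  qed
  define A where "A = (\<Sum>i<n. (Fr i * norm (x i))\<^sup>2)"
  define B where "B = (\<Sum>i<n. 1 / (norm (x i))\<^sup>2)"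
  have AH: "(1/real n) * A \<le> H" unfolding Heq A_def
    by (intro mult_left_mono Hlow) simp
  have sWnn: "0 \<le> sW" unfolding sW_def spectral_norm_def by (intro onorm_pos_le) simp
  have step1: "(1 / real n) * (\<Sum>i<n. spectral_norm (jacobian (\<lambda>u. net g u (W, tb)) (at (x i))))
      \<le> sW * ((1 / real n) * (\<Sum>i<n. Fr i))"
  proof -
    have "(1 / real n) * (\<Sum>i<n. spectral_norm (jacobian (\<lambda>u. net g u (W, tb)) (at (x i))))
       \<le> (1 / real n) * (\<Sum>i<n. sW * Fr i)"
      unfolding sW_def Fr_def
      by (intro mult_left_mono sum_mono jac_bound g_diff) simp
    then show ?thesis by (simp add: sum_distrib_left[symmetric] ac_simps)
  qed
  have "(\<Sum>i<n. Fr i) = (\<Sum>i<n. \<bar>Fr i * norm (x i)\<bar> * \<bar>1 / norm (x i)\<bar>)"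
    by (rule sum.cong) (auto simp: Fr_def x_nz)
  also have "\<dots> \<le> L2_set (\<lambda>i. Fr i * norm (x i)) {..<n} * L2_set (\<lambda>i. 1 / norm (x i)) {..<n}"
    by (rule L2_set_mult_ineq)
  also have "\<dots> = sqrt A * sqrt B"
    by (simp add: L2_set_def A_def B_def power_one_over)
  finally have CS: "(\<Sum>i<n. Fr i) \<le> sqrt A * sqrt B" .
  have "(1 / real n) * (\<Sum>i<n. Fr i) \<le> (1 / real n) * (sqrt A * sqrt B)"
    by (intro mult_left_mono CS) simp
  also have "\<dots> = sqrt ((1/real n) * A) * sqrt ((1 / real n) * B)"
  proof -
    have "sqrt ((1/real n) * A) * sqrt ((1 / real n) * B) = (sqrt (1/real n) * sqrt (1/real n)) * (sqrt A * sqrt B)"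
      by (simp only: real_sqrt_mult mult_ac)
    also have "sqrt (1/real n) * sqrt (1/real n) = 1 / real n" by simp
    finally show ?thesis by simp
  qed
  also have "\<dots> \<le> sqrt H * sqrt ((1 / real n) * B)"
    by (intro mult_right_mono real_sqrt_le_mono AH) (simp add: B_def sum_nonneg)
  finally have "sW * ((1 / real n) * (\<Sum>i<n. Fr i)) \<le> sW * (sqrt H * sqrt ((1 / real n) * B))"
    by (intro mult_left_mono sWnn)
  with step1 show ?thesis unfolding H_def B_def sW_def by (simp add: ac_simps)
qed
end
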